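(* Let $n\in\mathbb{N}$. The bounded invertible operator $\Phi:F\to F$, $\Phi\xi=(d_m/d_{m+1})\xi$ for $\xi\in E_m$, belongs to the Toeplitz algebra $\mathcal{T}$.
   Context: Let $L_n\subseteq(\mathbb{C}^2)^{\otimes n}$ be the symmetric tensors and $\rho_n$ the restriction to $L_n$ of the $n$-fold tensor power of the fundamental representation of $SU(2)$; $D_2\subseteq L_n\otimes L_n$ is the subspace of $\rho_n\otimes\rho_n$-invariant vectors. For $m\ge2$, $E_m=\big(\sum_{i=1}^{m-1}L_n^{\otimes(i-1)}\otimes D_2\otimes L_n^{\otimes(m-i-1)}\big)^\perp\subseteq L_n^{\otimes m}$, $E_1=L_n$, $E_0=\mathbb{C}$; $\iota_{k,m}:E_{k+m}\to E_k\otimes E_m$ are the inclusions induced by $L_n^{\otimes(k+m)}=L_n^{\otimes k}\otimes L_n^{\otimes m}$. $F=\bigoplus_{m\ge0}E_m$ (Hilbert direct sum); for $\xi\in E_k$, $T_\xi\zeta=\iota_{k,m}^*(\xi\otimes\zeta)$ for $\zeta\in E_m$; $\mathcal{T}$ is the unital $C^*$-subalgebra of $\mathcal{B}(F)$ generated by all $T_\xi$. Integers: $d_0=1$, $d_1=n+1$, $d_m=(n+1)d_{m-1}-d_{m-2}$. *)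

theory Defs
  imports Complex_Main "HOL-Combinatorics.Permutations"
begin

(* Vectors of (C^2)^{\<otimes>k} are modelled as functions on bool lists (words) of
   length k, vanishing on words of other lengths; the standard basis of C^2 is
   indexed by False (e_0) and True (e_1). *)

type_synonym vec = "bool list \<Rightarrow> complex"
type_synonym fvec = "nat \<Rightarrow> vec"   (* element of F: m-th component in E_m *)

definition words :: "nat \<Rightarrow> bool list set" where
  "words k = {w. length w = k}"

definition vecs :: "nat \<Rightarrow> vec set" where
  "vecs k = {v. \<forall>w. length w \<noteq> k \<longrightarrow> v w = 0}"

definition inp :: "nat \<Rightarrow> vec \<Rightarrow> vec \<Rightarrow> complex" where
  "inp k u v = (\<Sum>w\<in>words k. u w * cnj (v w))"

definition vnorm2 :: "nat \<Rightarrow> vec \<Rightarrow> real" where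
  "vnorm2 k v = (\<Sum>w\<in>words k. (cmod (v w))^2)"

definition permw :: "(nat \<Rightarrow> nat) \<Rightarrow> bool list \<Rightarrow> bool list" where
  "permw \<sigma> w = map (\<lambda>i. w ! \<sigma> i) [0..<length w]"

definition Lsym :: "nat \<Rightarrow> vec set" where
  "Lsym n = {v \<in> vecs n. \<forall>\<sigma>. \<sigma> permutes {..<n} \<longrightarrow>
                (\<forall>w. length w = n \<longrightarrow> v (permw \<sigma> w) = v w)}"

(* elementary tensor u \<otimes> v, u \<in> (C^2)^{\<otimes>a} *)
definition tens :: "nat \<Rightarrow> vec \<Rightarrow> vec \<Rightarrow> vec" where
  "tens a u v = (\<lambda>w. u (take a w) * v (drop a w))"

definition tensp :: "nat \<Rightarrow> vec set \<Rightarrow> vec set \<Rightarrow> vec set" where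
  "tensp a S T = {x. \<exists>(k::nat) u v. (\<forall>i<k. u i \<in> S \<and> v i \<in> T) \<and>
                        x = (\<lambda>w. \<Sum>i<k. tens a (u i) (v i) w)}"

definition scalars :: "vec set" where
  "scalars = {v. \<exists>c. v = (\<lambda>w. if w = [] then c else 0)}"

fun Lpow :: "nat \<Rightarrow> nat \<Rightarrow> vec set" where
  "Lpow n 0 = scalars"
| "Lpow n (Suc m) = tensp n (Lsym n) (Lpow n m)"

definition SU2 :: "(bool \<Rightarrow> bool \<Rightarrow> complex) \<Rightarrow> bool" where
  "SU2 U \<longleftrightarrow> (\<forall>i j. (\<Sum>k\<in>UNIV. cnj (U k i) * U k j) = (if i = j then 1 else 0))
             \<and> U False False * U True True - U False True * U True False = 1"

definition tpow_act :: "nat \<Rightarrow> (bool \<Rightarrow> bool \<Rightarrow> complex) \<Rightarrow> vec \<Rightarrow> vec" where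
  "tpow_act k U v = (\<lambda>w. if length w = k
        then (\<Sum>w'\<in>words k. (\<Prod>i<k. U (w ! i) (w' ! i)) * v w') else 0)"

definition D2 :: "nat \<Rightarrow> vec set" where
  "D2 n = {v \<in> tensp n (Lsym n) (Lsym n). \<forall>U. SU2 U \<longrightarrow> tpow_act (2*n) U v = v}"

definition sumsp :: "nat set \<Rightarrow> (nat \<Rightarrow> vec set) \<Rightarrow> vec set" where
  "sumsp I V = {x. \<exists>y. (\<forall>i\<in>I. y i \<in> V i) \<and> x = (\<lambda>w. \<Sum>i\<in>I. y i w)}"

definition E :: "nat \<Rightarrow> nat \<Rightarrow> vec set" where
  "E n m = (if m = 0 then scalars else if m = 1 then Lsym n else
     {v \<in> Lpow n m. \<forall>x \<in> sumsp {1..m-1}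
          (\<lambda>i. tensp (n*(i-1)) (Lpow n (i-1)) (tensp (2*n) (D2 n) (Lpow n (m-i-1)))).
        inp (n*m) v x = 0})"

(* adjoint of the inclusion of the subspace S: orthogonal projection onto S *)
definition proj :: "nat \<Rightarrow> vec set \<Rightarrow> vec \<Rightarrow> vec" where
  "proj k S x = (THE p. p \<in> S \<and> (\<forall>y\<in>S. inp k p y = inp k x y))"

definition Fock :: "nat \<Rightarrow> fvec set" where
  "Fock n = {f. (\<forall>m. f m \<in> E n m) \<and> summable (\<lambda>m. vnorm2 (n*m) (f m))}"

definition Finp :: "nat \<Rightarrow> fvec \<Rightarrow> fvec \<Rightarrow> complex" where
  "Finp n f g = (\<Sum>m. inp (n*m) (f m) (g m))"

definition Fnorm :: "nat \<Rightarrow> fvec \<Rightarrow> real" where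
  "Fnorm n f = sqrt (\<Sum>m. vnorm2 (n*m) (f m))"

(* T_\<xi> for \<xi> \<in> E_k: maps \<zeta> \<in> E_m to \<iota>_{k,m}^*(\<xi> \<otimes> \<zeta>) \<in> E_{k+m} *)
definition Tx :: "nat \<Rightarrow> nat \<Rightarrow> vec \<Rightarrow> fvec \<Rightarrow> fvec" where
  "Tx n k \<xi> = (\<lambda>f m. if m < k then (\<lambda>w. 0)
                   else proj (n*m) (E n m) (tens (n*k) \<xi> (f (m-k))))"

definition opnorm :: "nat \<Rightarrow> (fvec \<Rightarrow> fvec) \<Rightarrow> real" where
  "opnorm n A = Sup {Fnorm n (A f) | f. f \<in> Fock n \<and> Fnorm n f \<le> 1}"

definition bounded_op :: "nat \<Rightarrow> (fvec \<Rightarrow> fvec) \<Rightarrow> bool" where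
  "bounded_op n A \<longleftrightarrow> (\<forall>f\<in>Fock n. A f \<in> Fock n) \<and>
      bdd_above {Fnorm n (A f) | f. f \<in> Fock n \<and> Fnorm n f \<le> 1}"

(* the unital C*-subalgebra of B(F) generated by all T_\<xi>:
   smallest set containing 1 and the T_\<xi>, closed under linear combinations,
   products, adjoints and operator-norm limits *)
inductive_set Toep :: "nat \<Rightarrow> (fvec \<Rightarrow> fvec) set" for n where
  unit: "(\<lambda>f. f) \<in> Toep n"
| gen: "\<xi> \<in> E n k \<Longrightarrow> Tx n k \<xi> \<in> Toep n"
| add: "A \<in> Toep n \<Longrightarrow> B \<in> Toep n \<Longrightarrow> (\<lambda>f m w. A f m w + B f m w) \<in> Toep n"
| smult: "A \<in> Toep n \<Longrightarrow> (\<lambda>f m w. c * A f m w) \<in> Toep n"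
| comp: "A \<in> Toep n \<Longrightarrow> B \<in> Toep n \<Longrightarrow> (\<lambda>f. A (B f)) \<in> Toep n"
| adj: "A \<in> Toep n \<Longrightarrow> \<forall>f\<in>Fock n. B f \<in> Fock n \<Longrightarrow>
        \<forall>f\<in>Fock n. \<forall>g\<in>Fock n. Finp n (A f) g = Finp n f (B g) \<Longrightarrow> B \<in> Toep n"
| lim: "\<forall>j. A j \<in> Toep n \<Longrightarrow> bounded_op n B \<Longrightarrow>
        (\<lambda>j. opnorm n (\<lambda>f m w. A j f m w - B f m w)) \<longlonglongrightarrow> 0 \<Longrightarrow> B \<in> Toep n"

fun d :: "nat \<Rightarrow> nat \<Rightarrow> int" where
  "d n 0 = 1"
| "d n (Suc 0) = int n + 1"
| "d n (Suc (Suc m)) = (int n + 1) * d n (Suc m) - d n m"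

definition Phi :: "nat \<Rightarrow> fvec \<Rightarrow> fvec" where
  "Phi n f = (\<lambda>m w. complex_of_real (of_int (d n m) / of_int (d n (Suc m))) * f m w)"

end

theory Submission
  imports Defs "HOL-Analysis.Analysis"
begin


lemma finite_words[simp]: "finite (words k)"
proof -
  have "words k = {xs. set xs \<subseteq> (UNIV::bool set) \<and> length xs = k}" by (auto simp: words_def)
  thus ?thesis using finite_lists_length_eq[of "UNIV::bool set" k] by simp
qed

lemma in_words[simp]: "w \<in> words k \<longleftrightarrow> length w = k" by (simp add: words_def)

lemma inp_cnj: "inp k v u = cnj (inp k u v)"
  by (simp add: inp_def mult.commute)

lemma inp_lin_left: "inp k (\<lambda>w. a * u w + b * v w) y = a * inp k u y + b * inp k v y"
  by (simp add: inp_def sum.distrib sum_distrib_left algebra_simps)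

lemma inp_lin_right: "inp k y (\<lambda>w. a * u w + b * v w) = cnj a * inp k y u + cnj b * inp k y v"
  by (simp add: inp_def sum.distrib sum_distrib_left algebra_simps)

lemma inp_scale_left: "inp k (\<lambda>w. a * u w) y = a * inp k u y"
  by (simp add: inp_def sum_distrib_left algebra_simps)

lemma inp_scale_right: "inp k y (\<lambda>w. a * u w) = cnj a * inp k y u"
  by (simp add: inp_def sum_distrib_left algebra_simps)

lemma inp_add_left: "inp k (\<lambda>w. u w + v w) y = inp k u y + inp k v y"
  by (simp add: inp_def sum.distrib algebra_simps)

lemma inp_diff_left: "inp k (\<lambda>w. u w - v w) y = inp k u y - inp k v y"
  by (simp add: inp_def sum_subtractf algebra_simps)

lemma inp_add_right: "inp k y (\<lambda>w. u w + v w) = inp k y u + inp k y v"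
  by (simp add: inp_def sum.distrib algebra_simps)

lemma inp_diff_right: "inp k y (\<lambda>w. u w - v w) = inp k y u - inp k y v"
  by (simp add: inp_def sum_subtractf algebra_simps)

lemma inp_zero_left[simp]: "inp k (\<lambda>w. 0) y = 0" by (simp add: inp_def)
lemma inp_zero_right[simp]: "inp k y (\<lambda>w. 0) = 0" by (simp add: inp_def)

lemma inp_sum_left: "finite I \<Longrightarrow> inp k (\<lambda>w. \<Sum>i\<in>I. c i * x i w) y = (\<Sum>i\<in>I. c i * inp k (x i) y)"
  by (simp add: inp_def sum_distrib_left sum_distrib_right algebra_simps sum.swap[of _ I])

lemma inp_self: "inp k v v = complex_of_real (vnorm2 k v)"
  unfolding inp_def vnorm2_def of_real_sum by (intro sum.cong) (simp_all add: complex_norm_square flip: of_real_power)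

lemma vnorm2_nonneg: "vnorm2 k v \<ge> 0" by (simp add: vnorm2_def sum_nonneg)

lemma inp_self_zero: "inp k v v = 0 \<Longrightarrow> w \<in> words k \<Longrightarrow> v w = 0"
proof -
  assume h: "inp k v v = 0" "w \<in> words k"
  have "vnorm2 k v = 0" using h(1) by (simp add: inp_self)
  hence "\<forall>x\<in>words k. (cmod (v x))^2 = 0" unfolding vnorm2_def
    by (subst sum_nonneg_eq_0_iff[symmetric]) auto
  thus ?thesis using h(2) by auto
qed

definition subsp :: "nat \<Rightarrow> Defs.vec set \<Rightarrow> bool" where
  "subsp k S \<longleftrightarrow> S \<subseteq> vecs k \<and> (\<lambda>w. 0) \<in> S \<and> (\<forall>u\<in>S. \<forall>v\<in>S. (\<lambda>w. u w + v w) \<in> S)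
     \<and> (\<forall>c. \<forall>u\<in>S. (\<lambda>w. c * u w) \<in> S)"

lemma subspD:
  assumes "subsp k S"
  shows "S \<subseteq> vecs k" "(\<lambda>w. 0) \<in> S" "u \<in> S \<Longrightarrow> v \<in> S \<Longrightarrow> (\<lambda>w. u w + v w) \<in> S"
    "u \<in> S \<Longrightarrow> (\<lambda>w. c * u w) \<in> S"
  using assms unfolding subsp_def by blast+

lemma subsp_lin: "subsp k S \<Longrightarrow> u \<in> S \<Longrightarrow> v \<in> S \<Longrightarrow> (\<lambda>w. a * u w + b * v w) \<in> S"
  using subspD[of k S] by metis

lemma subsp_diff: "subsp k S \<Longrightarrow> u \<in> S \<Longrightarrow> v \<in> S \<Longrightarrow> (\<lambda>w. u w - v w) \<in> S"
  using subsp_lin[of k S u v 1 "-1"] by simp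

lemma subsp_sum: assumes "subsp k S" "finite I" shows "(\<forall>i\<in>I. x i \<in> S) \<Longrightarrow> (\<lambda>w. \<Sum>i\<in>I. c i * x i w) \<in> S"
  using assms(2)
proof (induction I rule: finite_induct)
  case empty then show ?case using subspD(2)[OF assms(1)] by simp
next
  case (insert a I)
  have "(\<lambda>w. c a * x a w + 1 * (\<Sum>i\<in>I. c i * x i w)) \<in> S"
    using insert subsp_lin[OF assms(1), of "x a" "\<lambda>w. \<Sum>i\<in>I. c i * x i w" "c a" 1] by simp
  thus ?case using insert by (simp add: algebra_simps)
qed

lemma vecs_zero: "v \<in> vecs k \<Longrightarrow> length w \<noteq> k \<Longrightarrow> v w = 0" by (simp add: vecs_def)

lemma vecs_eqI: "u \<in> vecs k \<Longrightarrow> v \<in> vecs k \<Longrightarrow> (\<And>w. length w = k \<Longrightarrow> u w = v w) \<Longrightarrow> u = v"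
  by (rule ext) (metis vecs_zero)

lemma proj_ex_aux:
  assumes "finite W" "W \<subseteq> words k"
  shows "subsp k S \<Longrightarrow> (\<forall>v\<in>S. \<forall>w. w \<notin> W \<longrightarrow> v w = 0) \<Longrightarrow> \<exists>p\<in>S. \<forall>y\<in>S. inp k p y = inp k x y"
  using assms
proof (induction W arbitrary: S x rule: finite_induct)
  case empty
  have "S \<subseteq> {\<lambda>w. 0}" using empty by auto
  hence "\<forall>y\<in>S. inp k (\<lambda>w. 0) y = inp k x y" by auto
  then show ?case using subspD(2)[OF empty(1)] by blast
next
  case (insert a W)
  define S' where "S' = {v\<in>S. v a = 0}"
  have sS': "subsp k S'" using insert(4) unfolding subsp_def S'_def by auto
  have supp: "\<forall>v\<in>S'. \<forall>w. w \<notin> W \<longrightarrow> v w = 0" using insert(5) S'_def by auto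
  have IH: "\<And>x. \<exists>p\<in>S'. \<forall>y\<in>S'. inp k p y = inp k x y"
    using insert(3)[OF sS' supp] insert(6) by auto
  show ?case
  proof (cases "\<forall>v\<in>S. v a = 0")
    case True
    hence "S' = S" by (auto simp: S'_def)
    thus ?thesis using IH by auto
  next
    case False
    then obtain s where s: "s \<in> S" "s a \<noteq> 0" by auto
    obtain ps where ps: "ps \<in> S'" "\<forall>y\<in>S'. inp k ps y = inp k s y" using IH by blast
    define r where "r = (\<lambda>w. s w - ps w)"
    have rS: "r \<in> S" unfolding r_def using subsp_diff[OF insert(4) s(1)] ps(1) S'_def by auto
    have ra: "r a \<noteq> 0" using s ps(1) by (simp add: r_def S'_def)
    have rorth: "\<forall>y\<in>S'. inp k r y = 0" using ps(2) by (simp add: r_def inp_diff_left)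
    have rr: "inp k r r \<noteq> 0" using inp_self_zero[of k r a] ra insert(6) by auto
    obtain px where px: "px \<in> S'" "\<forall>y\<in>S'. inp k px y = inp k x y" using IH by blast
    define p where "p = (\<lambda>w. 1 * px w + (inp k x r / inp k r r) * r w)"
    have pxS: "px \<in> S" using px(1) S'_def by auto
    have pS: "p \<in> S" unfolding p_def by (rule subsp_lin[OF insert(4) pxS rS])
    have pp: "inp k p y = inp k x y" if yS: "y \<in> S" for y
    proof -
      define t where "t = y a / r a"
      define y' where "y' = (\<lambda>w. 1 * y w + (- t) * r w)"
      have y'S0: "y' \<in> S" unfolding y'_def by (rule subsp_lin[OF insert(4) yS rS])
      have "y' a = 0" using ra by (simp add: y'_def t_def)
      hence y'S: "y' \<in> S'" using y'S0 S'_def by simp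
      have yeq: "y = (\<lambda>w. 1 * y' w + t * r w)" by (simp add: y'_def)
      have e1: "inp k p y' = inp k x y'"
        unfolding p_def inp_lin_left using px(2) y'S rorth by simp
      have "inp k px r = 0" using rorth px(1) inp_cnj[of k px r] by simp
      hence e2: "inp k p r = inp k x r" unfolding p_def inp_lin_left using rr by simp
      have "inp k p y = inp k p y' + cnj t * inp k p r"
        by (subst yeq, subst inp_lin_right, simp)
      also have "\<dots> = inp k x y' + cnj t * inp k x r" using e1 e2 by simp
      also have "\<dots> = inp k x y" by (subst yeq, subst inp_lin_right, simp)
      finally show ?thesis .
    qed
    show ?thesis by (rule bexI[of _ p]) (use pp pS in auto)
  qed
qed

lemma proj_ex: assumes "subsp k S" shows "\<exists>p\<in>S. \<forall>y\<in>S. inp k p y = inp k x y"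
proof -
  have "\<forall>v\<in>S. \<forall>w. w \<notin> words k \<longrightarrow> v w = 0" using subspD(1)[OF assms] by (auto simp: vecs_def)
  then show ?thesis by (rule proj_ex_aux[OF finite_words subset_refl assms])
qed

lemma proj_uniq:
  assumes "subsp k S" "p \<in> S" "\<forall>y\<in>S. inp k p y = inp k x y" "q \<in> S" "\<forall>y\<in>S. inp k q y = inp k x y"
  shows "p = q"
proof -
  define dd where "dd = (\<lambda>w. p w - q w)"
  have dS: "dd \<in> S" unfolding dd_def by (rule subsp_diff[OF assms(1,2,4)])
  have "inp k dd dd = 0" unfolding dd_def inp_diff_left using assms(3,5) dS[unfolded dd_def] by simp
  hence z: "\<And>w. length w = k \<Longrightarrow> dd w = 0" using inp_self_zero by auto
  have "p \<in> vecs k" "q \<in> vecs k" using subspD(1)[OF assms(1)] assms(2,4) by auto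
  thus ?thesis by (rule vecs_eqI) (use z in \<open>simp add: dd_def\<close>)
qed

lemma proj_char:
  assumes "subsp k S"
  shows "proj k S x \<in> S \<and> (\<forall>y\<in>S. inp k (proj k S x) y = inp k x y)"
proof -
  obtain p where p: "p \<in> S" "\<forall>y\<in>S. inp k p y = inp k x y" using proj_ex[OF assms] by blast
  have "proj k S x = p" unfolding proj_def
  proof (rule the_equality)
    show "p \<in> S \<and> (\<forall>y\<in>S. inp k p y = inp k x y)" using p by simp
    fix q assume "q \<in> S \<and> (\<forall>y\<in>S. inp k q y = inp k x y)"
    thus "q = p" using proj_uniq[OF assms, of q x p] p by simp
  qed
  thus ?thesis using p by simp
qed

lemma proj_in: "subsp k S \<Longrightarrow> proj k S x \<in> S" using proj_char by blast
lemma proj_inp: "subsp k S \<Longrightarrow> y \<in> S \<Longrightarrow> inp k (proj k S x) y = inp k x y" using proj_char by blast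

lemma proj_eqI: assumes "subsp k S" "p \<in> S" "\<forall>y\<in>S. inp k p y = inp k x y" shows "proj k S x = p"
  using proj_uniq[OF assms(1) proj_in[OF assms(1)] _ assms(2,3)] proj_inp[OF assms(1)] by simp

lemma proj_id: "subsp k S \<Longrightarrow> x \<in> S \<Longrightarrow> proj k S x = x"
  by (rule proj_eqI) auto

lemma proj_sum:
  assumes "subsp k S" "finite I"
  shows "proj k S (\<lambda>w. \<Sum>i\<in>I. c i * x i w) = (\<lambda>w. \<Sum>i\<in>I. c i * proj k S (x i) w)"
proof (rule proj_eqI[OF assms(1)])
  show "(\<lambda>w. \<Sum>i\<in>I. c i * proj k S (x i) w) \<in> S"
    by (rule subsp_sum[OF assms]) (simp add: proj_in[OF assms(1)])
  show "\<forall>y\<in>S. inp k (\<lambda>w. \<Sum>i\<in>I. c i * proj k S (x i) w) y = inp k (\<lambda>w. \<Sum>i\<in>I. c i * x i w) y"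
    using assms by (simp add: inp_sum_left proj_inp)
qed

lemma proj_zero: "subsp k S \<Longrightarrow> proj k S (\<lambda>w. 0) = (\<lambda>w. 0)"
  by (rule proj_eqI) (auto simp: subspD)


lemma sum_lessThan_concat: "(\<Sum>i<k1+(k2::nat). f i) = (\<Sum>i<k1. f i) + (\<Sum>i<k2. f (k1+i))"
  by (induction k2) (auto simp: add.assoc)

lemma tens_assoc: "tens a u (tens b v x) = tens (a+b) (tens a u v) x"
  unfolding tens_def
proof (rule ext)
  fix w :: "bool list"
  have "take a (take (a+b) w) = take a w" by (simp add: min_def)
  moreover have "drop a (take (a+b) w) = take b (drop a w)" by (simp add: drop_take)
  moreover have "drop b (drop a w) = drop (a+b) w" by (simp add: add.commute)
  ultimately show "u (take a w) * (v (take b (drop a w)) * x (drop b (drop a w))) =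
    u (take a (take (a + b) w)) * v (drop a (take (a + b) w)) * x (drop (a + b) w)" by simp
qed

lemma tens_vecs: assumes "u \<in> vecs a" "v \<in> vecs b" shows "tens a u v \<in> vecs (a+b)"
  unfolding vecs_def
proof (intro CollectI allI impI)
  fix w :: "bool list" assume "length w \<noteq> a + b"
  then have "length (take a w) \<noteq> a \<or> length (drop a w) \<noteq> b" by auto
  thus "tens a u v w = 0" using assms unfolding vecs_def tens_def by auto
qed

lemma tens_append: "length u = a \<Longrightarrow> tens a x y (u @ v) = x u * y v"
  by (simp add: tens_def)

lemma tensp_vecs: "S \<subseteq> vecs a \<Longrightarrow> T \<subseteq> vecs b \<Longrightarrow> tensp a S T \<subseteq> vecs (a+b)"
proof
  fix x assume ST: "S \<subseteq> vecs a" "T \<subseteq> vecs b" and "x \<in> tensp a S T"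
  then obtain k :: nat and u v :: "nat \<Rightarrow> Defs.vec" where uv: "\<forall>i<k. u i \<in> S \<and> v i \<in> T" "x = (\<lambda>w. \<Sum>i<k. tens a (u i) (v i) w)"
    unfolding tensp_def by blast
  have "tens a (u i) (v i) \<in> vecs (a+b)" if "i < k" for i using tens_vecs uv(1) ST that by blast
  thus "x \<in> vecs (a+b)" unfolding uv(2) vecs_def by auto
qed

lemma tensp_zero: "(\<lambda>w. 0) \<in> tensp a S T"
  unfolding tensp_def by (rule CollectI, rule exI[of _ 0]) simp

lemma tensp_elem: "u \<in> S \<Longrightarrow> v \<in> T \<Longrightarrow> tens a u v \<in> tensp a S T"
  unfolding tensp_def by (rule CollectI, rule exI[of _ 1], rule exI[of _ "\<lambda>i. u"], rule exI[of _ "\<lambda>i. v"]) simp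

lemma tensp_add: "x \<in> tensp a S T \<Longrightarrow> y \<in> tensp a S T \<Longrightarrow> (\<lambda>w. x w + y w) \<in> tensp a S T"
proof -
  assume "x \<in> tensp a S T" "y \<in> tensp a S T"
  then obtain k1 k2 :: nat and u1 v1 u2 v2 :: "nat \<Rightarrow> Defs.vec" where 1: "\<forall>i<k1. u1 i \<in> S \<and> v1 i \<in> T" "x = (\<lambda>w. \<Sum>i<k1. tens a (u1 i) (v1 i) w)"
    and 2: "\<forall>i<k2. u2 i \<in> S \<and> v2 i \<in> T" "y = (\<lambda>w. \<Sum>i<k2. tens a (u2 i) (v2 i) w)"
    unfolding tensp_def by blast
  define u where "u = (\<lambda>i. if i < k1 then u1 i else u2 (i - k1))"
  define v where "v = (\<lambda>i. if i < k1 then v1 i else v2 (i - k1))"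
  have "\<forall>i<k1+k2. u i \<in> S \<and> v i \<in> T" using 1 2 by (auto simp: u_def v_def)
  moreover have "(\<lambda>w. x w + y w) = (\<lambda>w. \<Sum>i<k1+k2. tens a (u i) (v i) w)"
  proof (rule ext)
    fix w
    have "(\<Sum>i<k1+k2. tens a (u i) (v i) w) = (\<Sum>i<k1. tens a (u i) (v i) w) + (\<Sum>i<k2. tens a (u (k1+i)) (v (k1+i)) w)"
      by (rule sum_lessThan_concat)
    also have "(\<Sum>i<k1. tens a (u i) (v i) w) = (\<Sum>i<k1. tens a (u1 i) (v1 i) w)"
      by (rule sum.cong) (auto simp: u_def v_def)
    also have "(\<Sum>i<k2. tens a (u (k1+i)) (v (k1+i)) w) = (\<Sum>i<k2. tens a (u2 i) (v2 i) w)"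
      by (simp add: u_def v_def)
    finally show "x w + y w = (\<Sum>i<k1+k2. tens a (u i) (v i) w)" using 1 2 by simp
  qed
  ultimately show ?thesis unfolding tensp_def by blast
qed

lemma tensp_scale: "(\<forall>c. \<forall>u\<in>S. (\<lambda>w. c * u w) \<in> S) \<Longrightarrow> x \<in> tensp a S T \<Longrightarrow> (\<lambda>w. c * x w) \<in> tensp a S T"
proof -
  assume S: "\<forall>c. \<forall>u\<in>S. (\<lambda>w. c * u w) \<in> S" and "x \<in> tensp a S T"
  then obtain k :: nat and u v :: "nat \<Rightarrow> Defs.vec" where 1: "\<forall>i<k. u i \<in> S \<and> v i \<in> T" "x = (\<lambda>w. \<Sum>i<k. tens a (u i) (v i) w)"
    unfolding tensp_def by blast
  define u' where "u' = (\<lambda>i w. c * u i w)"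
  have "\<forall>i<k. u' i \<in> S \<and> v i \<in> T" using 1 S by (auto simp: u'_def)
  moreover have "(\<lambda>w. c * x w) = (\<lambda>w. \<Sum>i<k. tens a (u' i) (v i) w)"
    unfolding 1 by (simp add: u'_def tens_def sum_distrib_left mult.assoc)
  ultimately show ?thesis unfolding tensp_def by blast
qed

lemma subsp_tensp: assumes "subsp a S" "subsp b T" shows "subsp (a+b) (tensp a S T)"
  unfolding subsp_def
proof (intro conjI ballI allI)
  show "tensp a S T \<subseteq> vecs (a + b)" using tensp_vecs subspD(1)[OF assms(1)] subspD(1)[OF assms(2)] by blast
  show "(\<lambda>w. 0) \<in> tensp a S T" by (rule tensp_zero)
  show "(\<lambda>w. u w + v w) \<in> tensp a S T" if "u \<in> tensp a S T" "v \<in> tensp a S T" for u v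
    using tensp_add that by blast
  have "\<forall>c. \<forall>u\<in>S. (\<lambda>w. c * u w) \<in> S" using subspD(4)[OF assms(1)] by blast
  thus "(\<lambda>w. c * u w) \<in> tensp a S T" if "u \<in> tensp a S T" for u c
    using tensp_scale that by blast
qed

lemma subsp_scalars: "subsp 0 scalars"
  unfolding subsp_def
proof (intro conjI ballI allI subsetI)
  show "x \<in> vecs 0" if "x \<in> scalars" for x using that by (auto simp: scalars_def vecs_def)
  show "(\<lambda>w. 0) \<in> scalars" unfolding scalars_def by (rule CollectI, rule exI[of _ 0]) auto
  fix u v assume "u \<in> scalars" "v \<in> scalars"
  then obtain a b where "u = (\<lambda>w. if w = [] then a else 0)" "v = (\<lambda>w. if w = [] then b else 0)"
    unfolding scalars_def by blast
  thus "(\<lambda>w. u w + v w) \<in> scalars" unfolding scalars_def by (intro CollectI exI[of _ "a+b"]) auto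
next
  fix c u assume "u \<in> scalars"
  then obtain a where "u = (\<lambda>w. if w = [] then a else 0)" unfolding scalars_def by blast
  thus "(\<lambda>w. c * u w) \<in> scalars" unfolding scalars_def by (intro CollectI exI[of _ "c*a"]) auto
qed

lemma permw_length[simp]: "length (permw \<sigma> w) = length w" by (simp add: permw_def)

lemma subsp_Lsym: "subsp n (Lsym n)"
  unfolding subsp_def
proof (intro conjI ballI allI)
  show "Lsym n \<subseteq> vecs n" unfolding Lsym_def by blast
  show "(\<lambda>w. 0) \<in> Lsym n" unfolding Lsym_def vecs_def by simp
  show "(\<lambda>w. u w + v w) \<in> Lsym n" if "u \<in> Lsym n" "v \<in> Lsym n" for u v
    using that unfolding Lsym_def vecs_def by simp
  show "(\<lambda>w. c * u w) \<in> Lsym n" if "u \<in> Lsym n" for u c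
    using that unfolding Lsym_def vecs_def by simp
qed

lemma subsp_Lpow: "subsp (n*m) (Lpow n m)"
proof (induction m)
  case 0 then show ?case using subsp_scalars by simp
next
  case (Suc m)
  have "subsp (n + n*m) (tensp n (Lsym n) (Lpow n m))" by (rule subsp_tensp[OF subsp_Lsym Suc])
  thus ?case by simp
qed

lemma subsp_orth: "subsp k S \<Longrightarrow> subsp k {v\<in>S. \<forall>x\<in>X. inp k v x = 0}"
  unfolding subsp_def by (simp add: inp_add_left inp_scale_left subset_iff)

definition Xsp :: "nat \<Rightarrow> nat \<Rightarrow> Defs.vec set" where
  "Xsp n m = sumsp {1..m-1}
          (\<lambda>i. tensp (n*(i-1)) (Lpow n (i-1)) (tensp (2*n) (D2 n) (Lpow n (m-i-1))))"

lemma E_ge2: "m \<noteq> 0 \<Longrightarrow> m \<noteq> 1 \<Longrightarrow> E n m = {v \<in> Lpow n m. \<forall>x \<in> Xsp n m. inp (n*m) v x = 0}"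
  unfolding E_def Xsp_def by simp

lemma E_0: "E n 0 = scalars" unfolding E_def by (rule if_P) (rule refl)
lemma E_1: "E n (Suc 0) = Lsym n" unfolding E_def by simp

lemma subsp_E: "subsp (n*m) (E n m)"
proof -
  consider "m = 0" | "m = 1" | "m \<noteq> 0 \<and> m \<noteq> 1" by blast
  thus ?thesis
  proof cases
    case 1 thus ?thesis using subsp_scalars E_0 by simp
  next
    case 2 thus ?thesis using subsp_Lsym E_1 by simp
  next
    case 3
    hence e: "E n m = {v \<in> Lpow n m. \<forall>x \<in> Xsp n m. inp (n*m) v x = 0}" using E_ge2 by blast
    show ?thesis unfolding e by (rule subsp_orth[OF subsp_Lpow])
  qed
qed

lemma E_vecs: "v \<in> E n m \<Longrightarrow> v \<in> vecs (n*m)" using subspD(1)[OF subsp_E[of n m]] by (rule subsetD)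


definition contr :: "nat \<Rightarrow> Defs.vec \<Rightarrow> Defs.vec \<Rightarrow> Defs.vec" where
  "contr a \<xi> x = (\<lambda>w. \<Sum>u\<in>words a. cnj (\<xi> u) * x (u @ w))"

lemma words_append_bij: "bij_betw (\<lambda>(u,v). u @ v) (words a \<times> words b) (words (a+b))"
  unfolding bij_betw_def
proof
  show "inj_on (\<lambda>(u, v). u @ v) (words a \<times> words b)"
    by (auto simp: inj_on_def)
  show "(\<lambda>(u, v). u @ v) ` (words a \<times> words b) = words (a + b)"
  proof
    show "(\<lambda>(u, v). u @ v) ` (words a \<times> words b) \<subseteq> words (a + b)" by auto
    show "words (a + b) \<subseteq> (\<lambda>(u, v). u @ v) ` (words a \<times> words b)"
    proof
      fix w assume "w \<in> words (a+b)"
      hence "(take a w, drop a w) \<in> words a \<times> words b" "w = (\<lambda>(u, v). u @ v) (take a w, drop a w)" by auto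
      thus "w \<in> (\<lambda>(u, v). u @ v) ` (words a \<times> words b)" by blast
    qed
  qed
qed

lemma sum_words_split: "(\<Sum>w\<in>words (a+b). f w) = (\<Sum>u\<in>words a. \<Sum>v\<in>words b. f (u @ v))"
proof -
  have "(\<Sum>w\<in>words (a+b). f w) = (\<Sum>p\<in>words a \<times> words b. f ((\<lambda>(u,v). u @ v) p))"
    using sum.reindex_bij_betw[OF words_append_bij, of f] by simp
  also have "\<dots> = (\<Sum>u\<in>words a. \<Sum>v\<in>words b. f (u @ v))"
    by (simp add: sum.cartesian_product case_prod_beta)
  finally show ?thesis .
qed

lemma inp_tens_contr: "inp (a+b) g (tens a \<xi> x) = inp b (contr a \<xi> g) x"
proof -
  have "inp (a+b) g (tens a \<xi> x) = (\<Sum>u\<in>words a. \<Sum>v\<in>words b. g (u @ v) * cnj (\<xi> u * x v))"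
    unfolding inp_def sum_words_split by (intro sum.cong refl) (simp add: tens_append)
  also have "\<dots> = (\<Sum>v\<in>words b. \<Sum>u\<in>words a. cnj (\<xi> u) * g (u @ v) * cnj (x v))"
    by (subst sum.swap) (simp add: algebra_simps)
  also have "\<dots> = inp b (contr a \<xi> g) x"
    unfolding inp_def contr_def by (simp add: sum_distrib_right)
  finally show ?thesis .
qed

lemma vnorm2_contr: "vnorm2 b (contr a \<xi> g) \<le> vnorm2 a \<xi> * vnorm2 (a+b) g"
proof -
  have pt: "(cmod (contr a \<xi> g v))^2 \<le> vnorm2 a \<xi> * (\<Sum>u\<in>words a. (cmod (g (u @ v)))^2)" for v
  proof -
    have "cmod (contr a \<xi> g v) \<le> (\<Sum>u\<in>words a. cmod (\<xi> u) * cmod (g (u @ v)))"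
      unfolding contr_def by (rule order_trans[OF norm_sum]) (simp add: norm_mult)
    hence "(cmod (contr a \<xi> g v))^2 \<le> (\<Sum>u\<in>words a. cmod (\<xi> u) * cmod (g (u @ v)))^2"
      by (simp add: power_mono)
    also have "\<dots> \<le> (\<Sum>u\<in>words a. (cmod (\<xi> u))^2) * (\<Sum>u\<in>words a. (cmod (g (u @ v)))^2)"
      by (rule Cauchy_Schwarz_ineq_sum)
    finally show ?thesis unfolding vnorm2_def .
  qed
  have "vnorm2 b (contr a \<xi> g) \<le> (\<Sum>v\<in>words b. vnorm2 a \<xi> * (\<Sum>u\<in>words a. (cmod (g (u @ v)))^2))"
    unfolding vnorm2_def[of b] by (rule sum_mono) (rule pt)
  also have "\<dots> = vnorm2 a \<xi> * vnorm2 (a+b) g"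
  proof -
    have "(\<Sum>v\<in>words b. \<Sum>u\<in>words a. (cmod (g (u @ v)))^2) = (\<Sum>u\<in>words a. \<Sum>v\<in>words b. (cmod (g (u @ v)))^2)"
      by (rule sum.swap)
    thus ?thesis unfolding vnorm2_def[of "a+b"] sum_words_split by (simp add: sum_distrib_left[symmetric])
  qed
  finally show ?thesis .
qed

definition delta :: "bool list \<Rightarrow> Defs.vec" where
  "delta u = (\<lambda>w. if w = u then 1 else 0)"

lemma vec_expand: "y \<in> vecs k \<Longrightarrow> y = (\<lambda>w. \<Sum>u\<in>words k. y u * delta u w)"
proof (rule ext)
  fix w assume y: "y \<in> vecs k"
  show "y w = (\<Sum>u\<in>words k. y u * delta u w)"
  proof (cases "length w = k")
    case True
    have "(\<Sum>u\<in>words k. y u * delta u w) = (\<Sum>u\<in>words k. if u = w then y w else 0)"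
      by (intro sum.cong) (auto simp: delta_def)
    also have "\<dots> = y w" using True by (simp add: sum.delta')
    finally show ?thesis by simp
  next
    case False
    have "(\<Sum>u\<in>words k. y u * delta u w) = 0" by (intro sum.neutral) (auto simp: delta_def False)
    thus ?thesis using y False by (simp add: vecs_def)
  qed
qed

lemma inp_delta_left: "length u = k \<Longrightarrow> inp k (delta u) y = cnj (y u)"
proof -
  assume "length u = k"
  hence "inp k (delta u) y = (\<Sum>w\<in>words k. if w = u then cnj (y u) else 0)"
    unfolding inp_def by (intro sum.cong) (auto simp: delta_def)
  also have "\<dots> = cnj (y u)" using \<open>length u = k\<close> by (simp add: sum.delta')
  finally show ?thesis .
qed

context
  fixes k :: nat and S :: "Defs.vec set"
  assumes sS: "subsp k S"
begin

abbreviation "P \<equiv> proj k S"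

lemma proj_expand: assumes y: "y \<in> vecs k" shows "P y = (\<lambda>w. \<Sum>u\<in>words k. y u * P (delta u) w)"
proof -
  have "P y = P (\<lambda>w. \<Sum>u\<in>words k. y u * delta u w)" using vec_expand[OF y] by (rule arg_cong)
  also have "\<dots> = (\<lambda>w. \<Sum>u\<in>words k. y u * P (delta u) w)" by (rule proj_sum[OF sS finite_words])
  finally show ?thesis .
qed

lemma proj_delta_sym: "length u = k \<Longrightarrow> length v = k \<Longrightarrow> P (delta u) v = cnj (P (delta v) u)"
proof -
  assume u: "length u = k" and v: "length v = k"
  have "inp k (P (delta u)) (P (delta v)) = inp k (delta u) (P (delta v))"
    by (rule proj_inp[OF sS proj_in[OF sS]])
  also have "\<dots> = cnj (P (delta v) u)" by (rule inp_delta_left[OF u])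
  finally have 1: "inp k (P (delta u)) (P (delta v)) = cnj (P (delta v) u)" .
  have "inp k (P (delta v)) (P (delta u)) = inp k (delta v) (P (delta u))"
    by (rule proj_inp[OF sS proj_in[OF sS]])
  also have "\<dots> = cnj (P (delta u) v)" by (rule inp_delta_left[OF v])
  finally have 2: "inp k (P (delta v)) (P (delta u)) = cnj (P (delta u) v)" .
  have "P (delta u) v = cnj (inp k (P (delta v)) (P (delta u)))" using 2 by simp
  also have "\<dots> = inp k (P (delta u)) (P (delta v))" by (rule inp_cnj[symmetric])
  finally show ?thesis using 1 by simp
qed

lemma kernel_ident:
  assumes a: "length a = k" and G: "G \<in> S"
  shows "(\<Sum>u\<in>words k. P (delta u) a * (\<Sum>b\<in>words k. cnj (P (delta u) b) * G b)) = G a"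
proof -
  have inner: "(\<Sum>u\<in>words k. P (delta u) a * cnj (P (delta u) b)) = P (delta b) a" if b: "length b = k" for b
  proof -
    have "(\<Sum>u\<in>words k. P (delta u) a * cnj (P (delta u) b)) = (\<Sum>u\<in>words k. P (delta b) u * P (delta u) a)"
      by (intro sum.cong refl) (simp add: proj_delta_sym[OF _ b] mult.commute)
    also have "\<dots> = P (P (delta b)) a"
    proof -
      have e: "P (P (delta b)) = (\<lambda>w. \<Sum>u\<in>words k. P (delta b) u * P (delta u) w)"
        by (rule proj_expand[OF subspD(1)[OF sS, THEN subsetD, OF proj_in[OF sS]]])
      show ?thesis by (subst e) (rule refl)
    qed
    also have "\<dots> = P (delta b) a" by (simp add: proj_id[OF sS proj_in[OF sS]])
    finally show ?thesis .
  qed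
  have "(\<Sum>u\<in>words k. P (delta u) a * (\<Sum>b\<in>words k. cnj (P (delta u) b) * G b))
      = (\<Sum>b\<in>words k. (\<Sum>u\<in>words k. P (delta u) a * cnj (P (delta u) b)) * G b)"
  proof -
    have "(\<Sum>u\<in>words k. P (delta u) a * (\<Sum>b\<in>words k. cnj (P (delta u) b) * G b))
      = (\<Sum>u\<in>words k. \<Sum>b\<in>words k. P (delta u) a * cnj (P (delta u) b) * G b)"
      by (simp add: sum_distrib_left mult.assoc)
    also have "\<dots> = (\<Sum>b\<in>words k. \<Sum>u\<in>words k. P (delta u) a * cnj (P (delta u) b) * G b)"
      by (rule sum.swap)
    also have "\<dots> = (\<Sum>b\<in>words k. (\<Sum>u\<in>words k. P (delta u) a * cnj (P (delta u) b)) * G b)"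
      by (simp add: sum_distrib_right)
    finally show ?thesis .
  qed
  also have "\<dots> = (\<Sum>b\<in>words k. G b * P (delta b) a)"
    by (intro sum.cong refl) (simp add: inner mult.commute)
  also have "\<dots> = P G a"
  proof -
    have e: "P G = (\<lambda>w. \<Sum>u\<in>words k. G u * P (delta u) w)"
      by (rule proj_expand[OF subspD(1)[OF sS, THEN subsetD, OF G]])
    show ?thesis by (subst e) (rule refl)
  qed
  also have "\<dots> = G a" by (simp add: proj_id[OF sS G])
  finally show ?thesis .
qed

end


lemma tens_sum_right: "tens a \<xi> (\<lambda>w. \<Sum>i\<in>I. f i w) = (\<lambda>w. \<Sum>i\<in>I. tens a \<xi> (f i) w)"
  by (simp add: tens_def sum_distrib_left)

lemma tens_zero_right: "tens a \<xi> (\<lambda>w. 0) = (\<lambda>w. 0)"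
  by (simp add: tens_def)

lemma tensp_obtain:
  assumes "g \<in> tensp a S T"
  obtains k :: nat and u v :: "nat \<Rightarrow> Defs.vec" where "\<forall>i<k. u i \<in> S \<and> v i \<in> T" "g = (\<lambda>w. \<Sum>i<k. tens a (u i) (v i) w)"
  using assms unfolding tensp_def by blast

lemma contr_tensp:
  assumes g: "g \<in> tensp n (Lsym n) T" and T: "subsp b T"
  shows "contr n \<xi> g \<in> T"
proof -
  obtain k :: nat and u v :: "nat \<Rightarrow> Defs.vec" where uv: "\<forall>i<k. u i \<in> Lsym n \<and> v i \<in> T" "g = (\<lambda>w. \<Sum>i<k. tens n (u i) (v i) w)"
    using tensp_obtain[OF g] by blast
  have "contr n \<xi> g = (\<lambda>w. \<Sum>i<k. (\<Sum>x\<in>words n. cnj (\<xi> x) * u i x) * v i w)"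
  proof (rule ext)
    fix w
    have "contr n \<xi> g w = (\<Sum>x\<in>words n. \<Sum>i<k. cnj (\<xi> x) * u i x * v i w)"
      unfolding contr_def uv(2) by (intro sum.cong refl) (simp add: tens_append sum_distrib_left mult.assoc)
    also have "\<dots> = (\<Sum>i<k. \<Sum>x\<in>words n. cnj (\<xi> x) * u i x * v i w)" by (rule sum.swap)
    also have "\<dots> = (\<Sum>i<k. (\<Sum>x\<in>words n. cnj (\<xi> x) * u i x) * v i w)" by (simp add: sum_distrib_right)
    finally show "contr n \<xi> g w = (\<Sum>i<k. (\<Sum>x\<in>words n. cnj (\<xi> x) * u i x) * v i w)" .
  qed
  also have "\<dots> \<in> T" by (rule subsp_sum[OF T]) (use uv(1) in auto)
  finally show ?thesis .
qed

lemma Lpow1_sub: "Lpow n (Suc 0) \<subseteq> Lsym n"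
proof
  fix g assume "g \<in> Lpow n (Suc 0)"
  hence g: "g \<in> tensp n (Lsym n) scalars" by simp
  obtain k :: nat and u v :: "nat \<Rightarrow> Defs.vec" where uv: "\<forall>i<k. u i \<in> Lsym n \<and> v i \<in> scalars" "g = (\<lambda>w. \<Sum>i<k. tens n (u i) (v i) w)"
    using tensp_obtain[OF g] by blast
  have "\<forall>i<k. \<exists>c. v i = (\<lambda>w. if w = [] then c else 0)" using uv(1) by (auto simp: scalars_def)
  then obtain c where c: "\<forall>i<k. v i = (\<lambda>w. if w = [] then c i else 0)" by metis
  have "tens n (u i) (v i) = (\<lambda>w. c i * u i w)" if i: "i < k" for i
  proof (rule ext)
    fix w
    have uvec: "u i \<in> vecs n" using uv(1) i Lsym_def by auto
    show "tens n (u i) (v i) w = c i * u i w"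
    proof (cases "length w \<le> n")
      case True thus ?thesis using c i by (simp add: tens_def)
    next
      case False
      hence "drop n w \<noteq> []" by simp
      moreover have "u i w = 0" using False uvec by (simp add: vecs_def)
      ultimately show ?thesis using c i by (simp add: tens_def)
    qed
  qed
  hence "g = (\<lambda>w. \<Sum>i\<in>{..<k}. c i * u i w)" using uv(2) by simp
  also have "\<dots> \<in> Lsym n" by (rule subsp_sum[OF subsp_Lsym]) (use uv(1) in auto)
  finally show "g \<in> Lsym n" .
qed

lemma contr_Lsym_scalar: assumes g: "g \<in> Lsym n" shows "contr n \<xi> g \<in> scalars"
proof -
  have gv: "g \<in> vecs n" using g Lsym_def by auto
  have "contr n \<xi> g = (\<lambda>w. if w = [] then contr n \<xi> g [] else 0)"
  proof (rule ext)
    fix w :: "bool list"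
    show "contr n \<xi> g w = (if w = [] then contr n \<xi> g [] else 0)"
    proof (cases "w = []")
      case False
      have "contr n \<xi> g w = 0" unfolding contr_def
        by (intro sum.neutral ballI) (use gv False in \<open>simp add: vecs_def\<close>)
      thus ?thesis using False by simp
    qed simp
  qed
  thus ?thesis unfolding scalars_def by blast
qed

lemma tens_tensp:
  assumes xi: "\<xi> \<in> Lsym n" and y: "y \<in> tensp (n*p) (Lpow n p) T"
  shows "tens n \<xi> y \<in> tensp (n*Suc p) (Lpow n (Suc p)) T"
proof -
  obtain k :: nat and u v :: "nat \<Rightarrow> Defs.vec" where uv: "\<forall>i<k. u i \<in> Lpow n p \<and> v i \<in> T" "y = (\<lambda>w. \<Sum>i<k. tens (n*p) (u i) (v i) w)"
    using tensp_obtain[OF y] by blast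
  have A: "tens n \<xi> y = (\<lambda>w. \<Sum>i<k. tens (n*Suc p) (tens n \<xi> (u i)) (v i) w)"
    unfolding uv(2) tens_sum_right tens_assoc by simp
  have B: "\<forall>i<k. tens n \<xi> (u i) \<in> Lpow n (Suc p) \<and> v i \<in> T"
    using uv(1) tensp_elem[OF xi] by auto
  show ?thesis unfolding tensp_def
    by (rule CollectI, rule exI[of _ k], rule exI[of _ "\<lambda>i. tens n \<xi> (u i)"], rule exI[of _ v]) (use A B in simp)
qed

lemma tens_Xsp:
  assumes xi: "\<xi> \<in> Lsym n" and j: "2 \<le> j" and x: "x \<in> Xsp n j"
  shows "tens n \<xi> x \<in> Xsp n (Suc j)"
proof -
  define V where "V = (\<lambda>m i. tensp (n*(i-1)) (Lpow n (i-1)) (tensp (2*n) (D2 n) (Lpow n (m-i-1))))"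
  have XV: "Xsp n m = sumsp {1..m-1} (V m)" for m unfolding Xsp_def V_def by simp
  obtain y where y: "\<forall>i\<in>{1..j-1}. y i \<in> V j i" "x = (\<lambda>w. \<Sum>i\<in>{1..j-1}. y i w)"
    using x unfolding XV sumsp_def by blast
  define y' where "y' = (\<lambda>i. if i = 1 then (\<lambda>w. 0) else tens n \<xi> (y (i-1)))"
  have mem: "\<forall>i\<in>{1..Suc j - 1}. y' i \<in> V (Suc j) i"
  proof
    fix i assume i: "i \<in> {1..Suc j - 1}"
    show "y' i \<in> V (Suc j) i"
    proof (cases "i = 1")
      case True thus ?thesis by (simp add: y'_def V_def tensp_zero)
    next
      case False
      with i have i2: "2 \<le> i" "i \<le> j" by auto
      have "i - 1 \<in> {1..j-1}" using i2 by auto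
      hence "y (i-1) \<in> V j (i-1)" by (rule bspec[OF y(1)])
      hence "y (i-1) \<in> tensp (n*(i-2)) (Lpow n (i-2)) (tensp (2*n) (D2 n) (Lpow n (Suc j-i-1)))"
        unfolding V_def using i2 by (simp add: numeral_2_eq_2)
      from tens_tensp[OF xi this]
      have "tens n \<xi> (y (i-1)) \<in> tensp (n*Suc (i-2)) (Lpow n (Suc (i-2))) (tensp (2*n) (D2 n) (Lpow n (Suc j-i-1)))" .
      moreover have "Suc (i-2) = i - 1" using i2 by simp
      ultimately show ?thesis using False by (simp add: y'_def V_def)
    qed
  qed
  have "(\<lambda>w. \<Sum>i\<in>{1..Suc j - 1}. y' i w) = tens n \<xi> x"
  proof (rule ext)
    fix w
    have "(\<Sum>i\<in>{1..Suc j - 1}. y' i w) = y' 1 w + (\<Sum>i\<in>{Suc 1..Suc (j-1)}. y' i w)"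
      using j by (simp add: sum.atLeast_Suc_atMost)
    also have "\<dots> = (\<Sum>i\<in>{1..j-1}. y' (Suc i) w)"
      by (simp only: sum.shift_bounds_cl_Suc_ivl) (simp add: y'_def)
    also have "\<dots> = (\<Sum>i\<in>{1..j-1}. tens n \<xi> (y i) w)"
      by (intro sum.cong refl) (simp add: y'_def)
    also have "\<dots> = tens n \<xi> x w" unfolding y(2) tens_sum_right by simp
    finally show "(\<Sum>i\<in>{1..Suc j - 1}. y' i w) = tens n \<xi> x w" .
  qed
  hence "tens n \<xi> x \<in> sumsp {1..Suc j - 1} (V (Suc j))" unfolding sumsp_def
    by (intro CollectI exI[of _ y'] conjI) (use mem in simp_all)
  thus ?thesis unfolding XV .
qed

lemma E_Lpow: "2 \<le> m \<Longrightarrow> E n m \<subseteq> Lpow n m" using E_ge2[of m n] by auto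

lemma contr_E:
  assumes xi: "\<xi> \<in> Lsym n" and g: "g \<in> E n (Suc j)"
  shows "contr n \<xi> g \<in> E n j"
proof -
  consider "j = 0" | "j = 1" | "2 \<le> j" by linarith
  thus ?thesis
  proof cases
    case 1
    thus ?thesis using g contr_Lsym_scalar E_0 E_1 by simp
  next
    case 2
    have "g \<in> Lpow n (Suc (Suc 0))" using g E_Lpow[of "Suc (Suc 0)" n] 2 by auto
    hence "g \<in> tensp n (Lsym n) (Lpow n (Suc 0))" by simp
    hence "contr n \<xi> g \<in> Lpow n (Suc 0)" using contr_tensp subsp_Lpow by blast
    thus ?thesis using Lpow1_sub 2 E_1 by auto
  next
    case 3
    have gL: "g \<in> Lpow n (Suc j)" using g E_Lpow[of "Suc j" n] 3 by auto
    hence "g \<in> tensp n (Lsym n) (Lpow n j)" by simp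
    hence cL: "contr n \<xi> g \<in> Lpow n j" using contr_tensp subsp_Lpow by blast
    have gorth: "\<forall>x\<in>Xsp n (Suc j). inp (n * Suc j) g x = 0" using g E_ge2[of "Suc j" n] 3 by auto
    have "inp (n*j) (contr n \<xi> g) x = 0" if x: "x \<in> Xsp n j" for x
    proof -
      have "inp (n*j) (contr n \<xi> g) x = inp (n + n*j) g (tens n \<xi> x)" by (rule inp_tens_contr[symmetric])
      also have "\<dots> = 0" using gorth tens_Xsp[OF xi 3 x] by simp
      finally show ?thesis .
    qed
    thus ?thesis using cL E_ge2[of j n] 3 by auto
  qed
qed

lemma slice_Lsym:
  assumes g: "g \<in> E n m" and m: "1 \<le> m"
  shows "(\<lambda>a. if length a = n then g (a @ v) else 0) \<in> Lsym n"
proof (cases "m = 1")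
  case True
  hence gs: "g \<in> Lsym n" using g E_1 by simp
  hence gv: "g \<in> vecs n" by (simp add: Lsym_def)
  show ?thesis
  proof (cases "v = []")
    case True
    have "(\<lambda>a. if length a = n then g (a @ v) else 0) = g"
      using True gv by (auto simp: vecs_def)
    thus ?thesis using gs by simp
  next
    case False
    have "(\<lambda>a. if length a = n then g (a @ v) else 0) = (\<lambda>w. 0)"
      using False gv by (auto simp: vecs_def)
    thus ?thesis using subspD(2)[OF subsp_Lsym] by simp
  qed
next
  case False
  hence "g \<in> Lpow n m" using E_Lpow[of m n] g m by auto
  moreover obtain m' where m': "m = Suc m'" using m by (cases m) auto
  ultimately have "g \<in> tensp n (Lsym n) (Lpow n m')" by simp
  then obtain k :: nat and u w :: "nat \<Rightarrow> Defs.vec" where uv: "\<forall>i<k. u i \<in> Lsym n \<and> w i \<in> Lpow n m'" "g = (\<lambda>x. \<Sum>i<k. tens n (u i) (w i) x)"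
    using tensp_obtain by blast
  have "(\<lambda>a. if length a = n then g (a @ v) else 0) = (\<lambda>a. \<Sum>i\<in>{..<k}. w i v * u i a)"
  proof (rule ext)
    fix a :: "bool list"
    show "(if length a = n then g (a @ v) else 0) = (\<Sum>i\<in>{..<k}. w i v * u i a)"
    proof (cases "length a = n")
      case True thus ?thesis unfolding uv(2) by (simp add: tens_append mult.commute)
    next
      case False
      have "u i a = 0" if "i < k" for i using uv(1) that False by (auto simp: Lsym_def vecs_def)
      thus ?thesis using False by simp
    qed
  qed
  also have "\<dots> \<in> Lsym n" by (rule subsp_sum[OF subsp_Lsym]) (use uv(1) in auto)
  finally show ?thesis .
qed

definition xiu :: "nat \<Rightarrow> bool list \<Rightarrow> Defs.vec" where
  "xiu n u = proj n (Lsym n) (delta u)"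

lemma xiu_Lsym: "xiu n u \<in> Lsym n" unfolding xiu_def by (rule proj_in[OF subsp_Lsym])

lemma ident:
  assumes g: "g \<in> E n m" and m: "1 \<le> m"
  shows "(\<lambda>z. \<Sum>u\<in>words n. tens n (xiu n u) (contr n (xiu n u) g) z) = g"
proof (rule ext)
  fix z :: "bool list"
  have gv: "g \<in> vecs (n*m)" by (rule E_vecs[OF g])
  show "(\<Sum>u\<in>words n. tens n (xiu n u) (contr n (xiu n u) g) z) = g z"
  proof (cases "length z < n")
    case True
    have "xiu n u (take n z) = 0" for u using xiu_Lsym[of n u] True by (auto simp: Lsym_def vecs_def)
    moreover have "g z = 0" using gv True m
      by (metis vecs_zero mult_le_mono2 mult_1_right not_le)
    ultimately show ?thesis by (simp add: tens_def)
  next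
    case False
    define a where "a = take n z"
    define v where "v = drop n z"
    define G where "G = (\<lambda>a. if length a = n then g (a @ v) else 0)"
    have a: "length a = n" using False by (simp add: a_def)
    have zeq: "z = a @ v" by (simp add: a_def v_def)
    have GS: "G \<in> Lsym n" unfolding G_def by (rule slice_Lsym[OF g m])
    have "(\<Sum>u\<in>words n. tens n (xiu n u) (contr n (xiu n u) g) z)
        = (\<Sum>u\<in>words n. xiu n u a * (\<Sum>b\<in>words n. cnj (xiu n u b) * G b))"
      unfolding zeq by (intro sum.cong refl) (simp add: tens_append[OF a] contr_def G_def)
    also have "\<dots> = G a" unfolding xiu_def by (rule kernel_ident[OF subsp_Lsym a GS])
    also have "\<dots> = g z" by (simp add: G_def a zeq)
    finally show ?thesis .
  qed
qed


type_synonym fv = "nat \<Rightarrow> bool list \<Rightarrow> complex"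

definition inT :: "nat \<Rightarrow> (fv \<Rightarrow> fv) \<Rightarrow> bool" where
  "inT n F \<longleftrightarrow> (\<exists>A\<in>Toep n. \<forall>f\<in>Fock n. A f = F f)"

lemma inT_obtain: assumes "inT n F" obtains A where "A \<in> Toep n" "\<forall>f\<in>Fock n. A f = F f"
  using assms unfolding inT_def by (elim bexE) 

lemma inT_I: assumes "A \<in> Toep n" "\<And>f. f \<in> Fock n \<Longrightarrow> A f = F f" shows "inT n F"
  unfolding inT_def by (intro bexI[of _ A] ballI assms)

lemma inT_cong: assumes "inT n F" "\<And>f. f \<in> Fock n \<Longrightarrow> F f = G f" shows "inT n G"
proof -
  obtain A where A: "A \<in> Toep n" "\<forall>f\<in>Fock n. A f = F f" by (rule inT_obtain[OF assms(1)])
  show ?thesis by (rule inT_I[OF A(1)]) (simp add: A(2) assms(2))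
qed

lemma inT_unit: "inT n (\<lambda>f. f)"
  by (rule inT_I[OF Toep.unit]) (rule refl)

lemma inT_Tx: "\<xi> \<in> E n k \<Longrightarrow> inT n (Tx n k \<xi>)"
  by (rule inT_I[OF Toep.gen]) (assumption, rule refl)

lemma inT_add: assumes "inT n F" "inT n G" shows "inT n (\<lambda>f m w. F f m w + G f m w)"
proof -
  obtain A where A: "A \<in> Toep n" "\<forall>f\<in>Fock n. A f = F f" by (rule inT_obtain[OF assms(1)])
  obtain B where B: "B \<in> Toep n" "\<forall>f\<in>Fock n. B f = G f" by (rule inT_obtain[OF assms(2)])
  have "(\<lambda>f m w. A f m w + B f m w) \<in> Toep n" by (rule Toep.add[OF A(1) B(1)])
  thus ?thesis by (rule inT_I) (simp add: A(2) B(2))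
qed

lemma inT_smult: assumes "inT n F" shows "inT n (\<lambda>f m w. c * F f m w)"
proof -
  obtain A where A: "A \<in> Toep n" "\<forall>f\<in>Fock n. A f = F f" by (rule inT_obtain[OF assms(1)])
  have "(\<lambda>f m w. c * A f m w) \<in> Toep n" by (rule Toep.smult[OF A(1)])
  thus ?thesis by (rule inT_I) (simp add: A(2))
qed

lemma inT_comp: assumes "inT n F" "inT n G" "\<And>f. f \<in> Fock n \<Longrightarrow> G f \<in> Fock n"
  shows "inT n (\<lambda>f. F (G f))"
proof -
  obtain A where A: "A \<in> Toep n" "\<forall>f\<in>Fock n. A f = F f" by (rule inT_obtain[OF assms(1)])
  obtain B where B: "B \<in> Toep n" "\<forall>f\<in>Fock n. B f = G f" by (rule inT_obtain[OF assms(2)])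
  have "(\<lambda>f. A (B f)) \<in> Toep n" by (rule Toep.comp[OF A(1) B(1)])
  thus ?thesis by (rule inT_I) (simp add: A(2) B(2) assms(3))
qed

lemma inT_sum: assumes "finite U" "\<forall>u\<in>U. inT n (F u)" shows "inT n (\<lambda>f m w. \<Sum>u\<in>U. F u f m w)"
  using assms
proof (induction U rule: finite_induct)
  case empty
  have "inT n (\<lambda>f m w. 0 * f m w)" by (rule inT_smult[OF inT_unit])
  thus ?case by simp
next
  case (insert a U)
  have "inT n (\<lambda>f m w. F a f m w + (\<Sum>u\<in>U. F u f m w))"
    by (rule inT_add) (use insert in auto)
  thus ?case using insert by simp
qed

lemma inT_adj:
  assumes "inT n F" "\<And>f. f \<in> Fock n \<Longrightarrow> B f \<in> Fock n"
    "\<And>f g. f \<in> Fock n \<Longrightarrow> g \<in> Fock n \<Longrightarrow> Finp n (F f) g = Finp n f (B g)"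
  shows "inT n B"
proof -
  obtain A where A: "A \<in> Toep n" "\<forall>f\<in>Fock n. A f = F f" by (rule inT_obtain[OF assms(1)])
  have "B \<in> Toep n" by (rule Toep.adj[OF A(1)]) (use assms A(2) in auto)
  thus ?thesis by (rule inT_I) simp
qed


lemma vnorm2_scale: "vnorm2 k (\<lambda>w. c * v w) = (cmod c)^2 * vnorm2 k v"
  by (simp add: vnorm2_def norm_mult power_mult_distrib sum_distrib_left)

lemma Fock_diag:
  assumes f: "f \<in> Fock n" and e: "\<And>m. cmod (e m) \<le> \<delta>"
  shows "(\<lambda>m w. e m * f m w) \<in> Fock n"
proof -
  have fE: "\<forall>m. f m \<in> E n m" and fs: "summable (\<lambda>m. vnorm2 (n*m) (f m))" using f by (auto simp: Fock_def)
  have "\<forall>m. (\<lambda>w. e m * f m w) \<in> E n m" using subspD(4)[OF subsp_E] fE by blast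
  moreover have "summable (\<lambda>m. vnorm2 (n*m) (\<lambda>w. e m * f m w))"
  proof (rule summable_comparison_test[OF _ summable_mult[OF fs, of "\<delta>^2"]])
    show "\<exists>N. \<forall>m\<ge>N. norm (vnorm2 (n * m) (\<lambda>w. e m * f m w)) \<le> \<delta>\<^sup>2 * vnorm2 (n * m) (f m)"
    proof (intro exI allI impI)
      fix m :: nat
      have "0 \<le> cmod (e m)" by simp
      hence "(cmod (e m))^2 \<le> \<delta>^2" using e[of m] by (simp add: power_mono)
      thus "norm (vnorm2 (n * m) (\<lambda>w. e m * f m w)) \<le> \<delta>\<^sup>2 * vnorm2 (n * m) (f m)"
        unfolding vnorm2_scale using vnorm2_nonneg[of "n*m" "f m"]
        by (simp add: mult_right_mono)
    qed
  qed
  ultimately show ?thesis unfolding Fock_def by simp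
qed

lemma Fnorm_nonneg: "f \<in> Fock n \<Longrightarrow> 0 \<le> Fnorm n f"
  unfolding Fnorm_def Fock_def by (auto intro!: suminf_nonneg vnorm2_nonneg)

lemma Fnorm_diag:
  assumes f: "f \<in> Fock n" and e: "\<And>m. cmod (e m) \<le> \<delta>" and d0: "0 \<le> \<delta>"
  shows "Fnorm n (\<lambda>m w. e m * f m w) \<le> \<delta> * Fnorm n f"
proof -
  have fs: "summable (\<lambda>m. vnorm2 (n*m) (f m))" using f by (auto simp: Fock_def)
  have gs: "summable (\<lambda>m. vnorm2 (n*m) (\<lambda>w. e m * f m w))" using Fock_diag[OF f e] by (auto simp: Fock_def)
  have le: "vnorm2 (n*m) (\<lambda>w. e m * f m w) \<le> \<delta>^2 * vnorm2 (n*m) (f m)" for m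
  proof -
    have "0 \<le> cmod (e m)" by simp
    hence "(cmod (e m))^2 \<le> \<delta>^2" using e[of m] by (simp add: power_mono)
    thus ?thesis unfolding vnorm2_scale using vnorm2_nonneg[of "n*m" "f m"] by (simp add: mult_right_mono)
  qed
  have "(\<Sum>m. vnorm2 (n*m) (\<lambda>w. e m * f m w)) \<le> (\<Sum>m. \<delta>^2 * vnorm2 (n*m) (f m))"
    by (rule suminf_le[OF le gs summable_mult[OF fs]])
  also have "\<dots> = \<delta>^2 * (\<Sum>m. vnorm2 (n*m) (f m))" by (rule suminf_mult[OF fs])
  finally have "sqrt (\<Sum>m. vnorm2 (n*m) (\<lambda>w. e m * f m w)) \<le> sqrt (\<delta>^2 * (\<Sum>m. vnorm2 (n*m) (f m)))"
    by (rule real_sqrt_le_mono)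
  also have "\<dots> = \<delta> * sqrt (\<Sum>m. vnorm2 (n*m) (f m))" using d0 by (simp add: real_sqrt_mult)
  finally show ?thesis unfolding Fnorm_def .
qed

definition Qop :: "nat \<Rightarrow> fv \<Rightarrow> fv" where
  "Qop M = (\<lambda>f m w. (if m < M then 0 else 1) * f m w)"

lemma Qop_Fock: "f \<in> Fock n \<Longrightarrow> Qop M f \<in> Fock n"
  unfolding Qop_def by (rule Fock_diag[where \<delta>=1]) auto

definition Bop :: "nat \<Rightarrow> Defs.vec \<Rightarrow> fv \<Rightarrow> fv" where
  "Bop n \<xi> = (\<lambda>f j. contr n \<xi> (f (Suc j)))"

lemma Bop_Fock:
  assumes xi: "\<xi> \<in> Lsym n" and f: "f \<in> Fock n"
  shows "Bop n \<xi> f \<in> Fock n"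
proof -
  have fE: "\<forall>m. f m \<in> E n m" and fs: "summable (\<lambda>m. vnorm2 (n*m) (f m))" using f by (auto simp: Fock_def)
  have "\<forall>j. Bop n \<xi> f j \<in> E n j" unfolding Bop_def
  proof
    fix j show "contr n \<xi> (f (Suc j)) \<in> E n j" by (rule contr_E[OF xi fE[rule_format]])
  qed
  moreover have "summable (\<lambda>j. vnorm2 (n*j) (Bop n \<xi> f j))"
  proof (rule summable_comparison_test[OF _ summable_mult[of "\<lambda>j. vnorm2 (n * Suc j) (f (Suc j))" "vnorm2 n \<xi>"]])
    show "summable (\<lambda>j. vnorm2 (n * Suc j) (f (Suc j)))" using summable_Suc_iff[of "\<lambda>m. vnorm2 (n*m) (f m)"] fs by simp
    show "\<exists>N. \<forall>j\<ge>N. norm (vnorm2 (n * j) (Bop n \<xi> f j)) \<le> vnorm2 n \<xi> * vnorm2 (n * Suc j) (f (Suc j))"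
    proof (intro exI allI impI)
      fix j :: nat
      have "vnorm2 (n * j) (Bop n \<xi> f j) \<le> vnorm2 n \<xi> * vnorm2 (n + n * j) (f (Suc j))"
        unfolding Bop_def by (rule vnorm2_contr)
      thus "norm (vnorm2 (n * j) (Bop n \<xi> f j)) \<le> vnorm2 n \<xi> * vnorm2 (n * Suc j) (f (Suc j))"
        using vnorm2_nonneg by simp
    qed
  qed
  ultimately show ?thesis unfolding Fock_def by simp
qed


lemma suminf_shift0: "a 0 = 0 \<Longrightarrow> suminf a = suminf (\<lambda>j. a (Suc j))" for a :: "nat \<Rightarrow> complex"
proof -
  assume a0: "a 0 = 0"
  have "(\<lambda>j. a (Suc j)) sums s \<longleftrightarrow> a sums s" for s using sums_Suc_iff[of a s] a0 by simp
  hence eq: "(sums) (\<lambda>j. a (Suc j)) = (sums) a" by (intro ext) 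
  show ?thesis unfolding suminf_def eq ..
qed

lemma Tx_adj:
  assumes xi: "\<xi> \<in> Lsym n" and f: "f \<in> Fock n" and g: "g \<in> Fock n"
  shows "Finp n (Tx n 1 \<xi> f) g = Finp n f (Bop n \<xi> g)"
proof -
  have gE: "\<forall>m. g m \<in> E n m" using g by (auto simp: Fock_def)
  have t: "inp (n * Suc j) (Tx n 1 \<xi> f (Suc j)) (g (Suc j)) = inp (n*j) (f j) (Bop n \<xi> g j)" for j
  proof -
    have "inp (n * Suc j) (Tx n 1 \<xi> f (Suc j)) (g (Suc j))
        = inp (n * Suc j) (proj (n * Suc j) (E n (Suc j)) (tens n \<xi> (f j))) (g (Suc j))"
      by (simp add: Tx_def)
    also have "\<dots> = inp (n * Suc j) (tens n \<xi> (f j)) (g (Suc j))"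
      by (rule proj_inp[OF subsp_E]) (use gE in auto)
    also have "\<dots> = cnj (inp (n + n*j) (g (Suc j)) (tens n \<xi> (f j)))" by (simp only: mult_Suc_right) (rule inp_cnj)
    also have "\<dots> = cnj (inp (n*j) (contr n \<xi> (g (Suc j))) (f j))" by (simp only: inp_tens_contr)
    also have "\<dots> = inp (n*j) (f j) (Bop n \<xi> g j)" by (simp add: Bop_def inp_cnj[of "n*j" "f j"])
    finally show ?thesis .
  qed
  have z: "inp (n * 0) (Tx n 1 \<xi> f 0) (g 0) = 0" by (simp add: Tx_def)
  have "Finp n (Tx n 1 \<xi> f) g = (\<Sum>j. inp (n * Suc j) (Tx n 1 \<xi> f (Suc j)) (g (Suc j)))"
    unfolding Finp_def by (rule suminf_shift0) (rule z)
  also have "\<dots> = Finp n f (Bop n \<xi> g)" unfolding Finp_def t ..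
  finally show ?thesis .
qed


lemma inT_Bop: assumes xi: "\<xi> \<in> Lsym n" shows "inT n (Bop n \<xi>)"
proof (rule inT_adj[OF inT_Tx[of \<xi> n 1]])
  show "\<xi> \<in> E n 1" using xi E_1 by simp
  show "Bop n \<xi> f \<in> Fock n" if "f \<in> Fock n" for f by (rule Bop_Fock[OF xi that])
  show "Finp n (Tx n 1 \<xi> f) g = Finp n f (Bop n \<xi> g)" if "f \<in> Fock n" "g \<in> Fock n" for f g
    by (rule Tx_adj[OF xi that])
qed

lemma inT_Qop: "inT n (Qop M)"
proof (induction M)
  case 0
  show ?case by (rule inT_cong[OF inT_unit]) (simp add: Qop_def)
next
  case (Suc M)
  define F where "F = (\<lambda>f m w. \<Sum>u\<in>words n. Tx n 1 (xiu n u) (Qop M (Bop n (xiu n u) f)) m w)"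
  have "inT n F" unfolding F_def
  proof (rule inT_sum[OF finite_words], rule ballI)
    fix u
    have i1: "inT n (\<lambda>f. Qop M (Bop n (xiu n u) f))"
      by (rule inT_comp[OF Suc inT_Bop[OF xiu_Lsym]]) (rule Bop_Fock[OF xiu_Lsym])
    show "inT n (\<lambda>f. Tx n 1 (xiu n u) (Qop M (Bop n (xiu n u) f)))"
      by (rule inT_comp[OF inT_Tx i1]) (auto simp: E_1 xiu_Lsym Qop_Fock Bop_Fock)
  qed
  moreover have "F f = Qop (Suc M) f" if f: "f \<in> Fock n" for f
  proof (rule ext, rule ext)
    fix m w
    have fE: "\<forall>m. f m \<in> E n m" using f by (auto simp: Fock_def)
    show "F f m w = Qop (Suc M) f m w"
    proof (cases m)
      case 0 thus ?thesis by (simp add: F_def Tx_def Qop_def)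
    next
      case (Suc j)
      show ?thesis
      proof (cases "j < M")
        case True
        have pz: "proj (n + n*j) (E n (Suc j)) (\<lambda>w. 0) = (\<lambda>w. 0)" using proj_zero[OF subsp_E[of n "Suc j"]] by simp
        show ?thesis using Suc True
          by (simp add: F_def Tx_def Qop_def tens_zero_right pz)
      next
        case False
        have "F f m w = (\<Sum>u\<in>words n. proj (n * Suc j) (E n (Suc j)) (tens n (xiu n u) (contr n (xiu n u) (f (Suc j)))) w)"
          using False Suc by (simp add: F_def Tx_def Qop_def Bop_def)
        also have "\<dots> = proj (n * Suc j) (E n (Suc j)) (\<lambda>z. \<Sum>u\<in>words n. 1 * tens n (xiu n u) (contr n (xiu n u) (f (Suc j))) z) w"
        proof -
          have ps: "proj (n * Suc j) (E n (Suc j)) (\<lambda>z. \<Sum>u\<in>words n. 1 * tens n (xiu n u) (contr n (xiu n u) (f (Suc j))) z)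
             = (\<lambda>z. \<Sum>u\<in>words n. 1 * proj (n * Suc j) (E n (Suc j)) (tens n (xiu n u) (contr n (xiu n u) (f (Suc j)))) z)"
            by (rule proj_sum[OF subsp_E finite_words])
          show ?thesis using fun_cong[OF ps, of w] by simp
        qed
        also have "\<dots> = proj (n * Suc j) (E n (Suc j)) (f (Suc j)) w"
          using ident[of "f (Suc j)" n "Suc j"] fE by simp
        also have "\<dots> = f (Suc j) w" using proj_id[OF subsp_E[of n "Suc j"] fE[rule_format, of "Suc j"]] by simp
        finally show ?thesis using False Suc by (simp add: Qop_def)
      qed
    qed
  qed
  ultimately show ?case by (rule inT_cong)
qed

definition Dop :: "(nat \<Rightarrow> complex) \<Rightarrow> fv \<Rightarrow> fv" where
  "Dop e = (\<lambda>f m w. e m * f m w)"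

lemma inT_Dop: "inT n (Dop (\<lambda>m. if m < M then cc m else L))"
proof (induction M)
  case 0
  have "inT n (\<lambda>f m w. L * f m w)" by (rule inT_smult[OF inT_unit])
  thus ?case by (simp add: Dop_def)
next
  case (Suc M)
  have "inT n (\<lambda>f m w. Dop (\<lambda>m. if m < M then cc m else L) f m w
          + (cc M - L) * (Qop M f m w + (-1) * Qop (Suc M) f m w))"
    by (intro inT_add inT_smult Suc inT_Qop)
  thus ?case
  proof (rule inT_cong)
    fix f
    show "(\<lambda>m w. Dop (\<lambda>m. if m < M then cc m else L) f m w + (cc M - L) * (Qop M f m w + - 1 * Qop (Suc M) f m w))
       = Dop (\<lambda>m. if m < Suc M then cc m else L) f"
    proof (rule ext, rule ext)
      fix m w
      consider "m < M" | "m = M" | "M < m" by linarith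
      thus "Dop (\<lambda>m. if m < M then cc m else L) f m w + (cc M - L) * (Qop M f m w + - 1 * Qop (Suc M) f m w)
          = Dop (\<lambda>m. if m < Suc M then cc m else L) f m w"
      proof cases
        case 1 thus ?thesis by (simp add: Dop_def Qop_def)
      next
        case 2
        hence "Dop (\<lambda>m. if m < M then cc m else L) f m w + (cc M - L) * (Qop M f m w + - 1 * Qop (Suc M) f m w)
           = L * f M w + (cc M - L) * f M w" by (simp add: Dop_def Qop_def)
        also have "\<dots> = cc M * f M w" by (simp add: algebra_simps)
        finally show ?thesis using 2 by (simp add: Dop_def)
      next
        case 3 thus ?thesis by (simp add: Dop_def Qop_def)
      qed
    qed
  qed
qed


lemma d_basic: assumes n: "1 \<le> n" shows "1 \<le> d n m \<and> d n m < d n (Suc m)"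
proof (induction m)
  case 0 show ?case using n by simp
next
  case (Suc m)
  have h: "2 * d n (Suc m) \<le> (int n + 1) * d n (Suc m)"
    by (rule mult_right_mono) (use n Suc in auto)
  have "d n (Suc (Suc m)) = (int n + 1) * d n (Suc m) - d n m" by simp
  thus ?case using Suc h by linarith
qed

lemma d_cassini: "(d n (Suc m))^2 - d n m * d n (Suc (Suc m)) = 1"
proof (induction m)
  case 0 show ?case by (simp add: power2_eq_square algebra_simps)
next
  case (Suc m)
  define a where "a = d n m"
  define b where "b = d n (Suc m)"
  define N where "N = int n + 1"
  have c: "d n (Suc (Suc m)) = N * b - a" by (simp add: a_def b_def N_def)
  have c3: "d n (Suc (Suc (Suc m))) = N * d n (Suc (Suc m)) - b" by (simp add: b_def N_def)
  have ih0: "b^2 - a * d n (Suc (Suc m)) = 1" unfolding a_def b_def by (rule Suc.IH)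
  have ih: "b^2 - a * (N*b - a) = 1" using ih0 unfolding c .
  have "(N*b - a)^2 - b * (N * (N*b - a) - b) = b^2 - a * (N*b - a)"
    by (simp add: power2_eq_square algebra_simps)
  thus ?case unfolding c3 c b_def[symmetric] using ih by simp
qed

lemma frac_aux1: "1 \<le> (x::real) \<Longrightarrow> x < y \<Longrightarrow> 0 \<le> x/y \<and> x/y \<le> 1"
  by (simp add: divide_simps)

lemma frac_aux2: "0 < (y::real) \<Longrightarrow> 0 < z \<Longrightarrow> x * z \<le> y * y \<Longrightarrow> x / y \<le> y / z"
  by (simp add: divide_simps)

definition rr :: "nat \<Rightarrow> nat \<Rightarrow> real" where
  "rr n m = real_of_int (d n m) / real_of_int (d n (Suc m))"

lemma rr_bounds: assumes "1 \<le> n" shows "0 \<le> rr n m \<and> rr n m \<le> 1"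
proof -
  have "1 \<le> d n m" "d n m < d n (Suc m)" using d_basic[OF assms] by auto
  hence "1 \<le> real_of_int (d n m)" "real_of_int (d n m) < real_of_int (d n (Suc m))" by simp_all
  thus ?thesis unfolding rr_def by (rule frac_aux1)
qed

lemma rr_inc: assumes "1 \<le> n" shows "rr n m \<le> rr n (Suc m)"
proof -
  have p1: "0 < real_of_int (d n (Suc m))" "0 < real_of_int (d n (Suc (Suc m)))"
    using d_basic[OF assms, of "Suc m"] d_basic[OF assms, of "Suc (Suc m)"] by (auto simp del: d.simps)
  have "d n m * d n (Suc (Suc m)) \<le> d n (Suc m) * d n (Suc m)"
    using d_cassini[of n m] by (simp add: power2_eq_square)
  hence "real_of_int (d n m) * real_of_int (d n (Suc (Suc m))) \<le> real_of_int (d n (Suc m)) * real_of_int (d n (Suc m))"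
    by (metis of_int_le_iff of_int_mult)
  thus ?thesis unfolding rr_def by (rule frac_aux2[OF p1])
qed

lemma Fock_zero: "(\<lambda>m w. 0) \<in> Fock n"
proof -
  have "vnorm2 k (\<lambda>w. 0) = 0" for k by (simp add: vnorm2_def)
  moreover have "\<forall>m. (\<lambda>w. 0) \<in> E n m" using subspD(2)[OF subsp_E] by blast
  ultimately show ?thesis unfolding Fock_def by simp
qed

lemma Fnorm_zero: "Fnorm n (\<lambda>m w. 0) = 0"
proof -
  have "vnorm2 k (\<lambda>w. 0) = 0" for k by (simp add: vnorm2_def)
  thus ?thesis unfolding Fnorm_def by simp
qed

theorem lemma4p4:
  fixes n :: nat
  assumes "n \<ge> 1"
  shows "\<exists>A \<in> Toep n. \<forall>f \<in> Fock n. A f = Phi n f"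
proof -
  have n: "1 \<le> n" using assms by simp
  define cc where "cc = (\<lambda>m. complex_of_real (rr n m))"
  have Phi_eq: "Phi n f = (\<lambda>m w. cc m * f m w)" for f
    by (simp add: Phi_def cc_def rr_def)
  have cc_le: "cmod (cc m) \<le> 1" for m using rr_bounds[OF n, of m] by (simp add: cc_def)
  have inc: "incseq (rr n)" by (rule incseq_SucI) (rule rr_inc[OF n])
  obtain Lr where lim: "rr n \<longlonglongrightarrow> Lr" and le: "\<forall>i. rr n i \<le> Lr"
    using incseq_convergent[OF inc, of 1] rr_bounds[OF n] by blast
  define D where "D = (\<lambda>j. Dop (\<lambda>m. if m < j then cc m else complex_of_real Lr))"
  have "\<forall>j. \<exists>A. A \<in> Toep n \<and> (\<forall>f\<in>Fock n. A f = D j f)"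
  proof
    fix j
    have "inT n (D j)" unfolding D_def by (rule inT_Dop)
    then obtain A where "A \<in> Toep n" "\<forall>f\<in>Fock n. A f = D j f" by (rule inT_obtain)
    thus "\<exists>A. A \<in> Toep n \<and> (\<forall>f\<in>Fock n. A f = D j f)" by blast
  qed
  from choice[OF this] obtain A where A: "\<And>j. A j \<in> Toep n" "\<And>j f. f \<in> Fock n \<Longrightarrow> A j f = D j f"
    by blast
  have PhiF: "Phi n f \<in> Fock n" if "f \<in> Fock n" for f
    unfolding Phi_eq by (rule Fock_diag[OF that cc_le])
  have PhiN: "Fnorm n (Phi n f) \<le> 1" if "f \<in> Fock n" "Fnorm n f \<le> 1" for f
  proof -
    have "Fnorm n (Phi n f) \<le> 1 * Fnorm n f" unfolding Phi_eq by (rule Fnorm_diag[OF that(1) cc_le]) simp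
    thus ?thesis using that(2) by simp
  qed
  have bo: "bounded_op n (Phi n)" unfolding bounded_op_def
  proof
    show "\<forall>f\<in>Fock n. Phi n f \<in> Fock n" using PhiF by blast
    show "bdd_above {Fnorm n (Phi n f) |f. f \<in> Fock n \<and> Fnorm n f \<le> 1}"
      by (rule bdd_aboveI[of _ 1]) (use PhiN in blast)
  qed
  define e where "e = (\<lambda>j m. (if m < j then cc m else complex_of_real Lr) - cc m)"
  have e_le: "cmod (e j m) \<le> Lr - rr n j" for j m
  proof (cases "m < j")
    case True thus ?thesis using le by (simp add: e_def)
  next
    case False
    hence "rr n j \<le> rr n m" using incseqD[OF inc] by simp
    moreover have "rr n m \<le> Lr" using le by simp
    ultimately show ?thesis using False by (simp add: e_def cc_def flip: of_real_diff)
  qed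
  have diff: "(\<lambda>m w. A j f m w - Phi n f m w) = (\<lambda>m w. e j m * f m w)" if "f \<in> Fock n" for j f
    using A(2)[OF that] by (simp add: D_def Dop_def Phi_eq e_def algebra_simps)
  define S where "S = (\<lambda>j. {Fnorm n (\<lambda>m w. A j f m w - Phi n f m w) |f. f \<in> Fock n \<and> Fnorm n f \<le> 1})"
  have Sle: "x \<le> Lr - rr n j" if xS: "x \<in> S j" for j x
  proof -
    obtain f :: fv where f: "f \<in> Fock n" "Fnorm n f \<le> 1" "x = Fnorm n (\<lambda>m w. A j f m w - Phi n f m w)"
      using xS unfolding S_def by blast
    have d0: "0 \<le> Lr - rr n j" using le[rule_format, of j] by simp
    have "x \<le> (Lr - rr n j) * Fnorm n f" unfolding f(3) diff[OF f(1)]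
      by (rule Fnorm_diag[OF f(1) e_le d0])
    also have "\<dots> \<le> (Lr - rr n j) * 1" by (rule mult_left_mono[OF f(2) d0])
    finally show ?thesis by simp
  qed
  have S0: "Fnorm n (\<lambda>m w. A j (\<lambda>m w. 0) m w - Phi n (\<lambda>m w. 0) m w) \<in> S j" for j
    unfolding S_def using Fock_zero Fnorm_zero by force
  have S0v: "Fnorm n (\<lambda>m w. A j (\<lambda>m w. 0) m w - Phi n (\<lambda>m w. 0) m w) = 0" for j
    unfolding diff[OF Fock_zero] by (simp add: Fnorm_zero)
  have bnd: "0 \<le> opnorm n (\<lambda>f m w. A j f m w - Phi n f m w) \<and> opnorm n (\<lambda>f m w. A j f m w - Phi n f m w) \<le> Lr - rr n j" for j
  proof -
    have o: "opnorm n (\<lambda>f m w. A j f m w - Phi n f m w) = Sup (S j)" by (simp add: opnorm_def S_def)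
    have ne: "S j \<noteq> {}" using S0 by blast
    have ba: "bdd_above (S j)" by (rule bdd_aboveI[of _ "Lr - rr n j"]) (rule Sle)
    have "0 \<le> Sup (S j)" by (rule cSup_upper2[OF S0 _ ba]) (simp add: S0v)
    moreover have "Sup (S j) \<le> Lr - rr n j" by (rule cSup_least[OF ne]) (rule Sle)
    ultimately show ?thesis using o by simp
  qed
  have l2: "(\<lambda>j. Lr - rr n j) \<longlonglongrightarrow> 0"
    using tendsto_diff[OF tendsto_const[of Lr] lim] by simp
  have "(\<lambda>j. opnorm n (\<lambda>f m w. A j f m w - Phi n f m w)) \<longlonglongrightarrow> 0"
    by (rule tendsto_sandwich[of "\<lambda>j. 0" _ sequentially "\<lambda>j. Lr - rr n j"])
       (use bnd l2 in auto)
  hence "Phi n \<in> Toep n" by (intro Toep.lim[of A n "Phi n"]) (use A(1) bo in auto)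
  thus ?thesis by (rule bexI[rotated]) simp
qed


end
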